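(* Let $p$ be a prime, let $f:\mathbb{F}_{p^n}\to\mathbb{F}_p$ be $s_1$-plateaued and $g:\mathbb{F}_{p^m}\to\mathbb{F}_p$ be $s_2$-plateaued. Let $M=(m_{x,y})_{x,y\in\mathbb{F}_{p^n}}$ with $m_{x,y}=\zeta_p^{f(x+y)}$ and $N=(n_{a,b})_{a,b\in\mathbb{F}_{p^m}}$ with $n_{a,b}=\zeta_p^{g(a+b)}$, and let $P=M\otimes N$ be their Kronecker product. Then $PP^*P=p^{n+m+s_1+s_2}P$, where $P^*$ is the conjugate transpose.
   Context: $\zeta_p=e^{2\pi i/p}$, $Tr_n(z)=\sum_{i=0}^{n-1}z^{p^i}$. The Walsh transform of $f:\mathbb{F}_{p^n}\to\mathbb{F}_p$ is $\widehat f(\mu)=\sum_{x}\zeta_p^{f(x)-Tr_n(\mu x)}$; $f$ is $s$-plateaued if $|\widehat f(\mu)|\in\{0,p^{(n+s)/2}\}$ for all $\mu$ (analogously for $g$ on $\mathbb{F}_{p^m}$). *)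

theory Defs
  imports "HOL-Analysis.Analysis"
begin

definition prime_subfield :: "'a::field set" where
  "prime_subfield = range of_nat"

definition fp_lift :: "nat \<Rightarrow> 'a::field \<Rightarrow> nat" where
  "fp_lift p z = (THE k. k < p \<and> of_nat k = z)"

definition zeta :: "nat \<Rightarrow> complex" where
  "zeta p = cis (2 * pi / real p)"

definition zeta_pow :: "nat \<Rightarrow> 'a::field \<Rightarrow> complex" where
  "zeta_pow p z = zeta p ^ fp_lift p z"

definition tr :: "nat \<Rightarrow> nat \<Rightarrow> 'a::field \<Rightarrow> 'a" where
  "tr p n z = (\<Sum>i<n. z ^ (p ^ i))"

definition walsh :: "nat \<Rightarrow> nat \<Rightarrow> ('a::{field,finite} \<Rightarrow> 'a) \<Rightarrow> 'a \<Rightarrow> complex" where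
  "walsh p n f \<mu> = (\<Sum>x\<in>UNIV. zeta_pow p (f x - tr p n (\<mu> * x)))"

definition plateaued :: "nat \<Rightarrow> nat \<Rightarrow> nat \<Rightarrow> ('a::{field,finite} \<Rightarrow> 'a) \<Rightarrow> bool" where
  "plateaued p n s f \<longleftrightarrow>
     (\<forall>\<mu>. cmod (walsh p n f \<mu>) \<in> {0, real p powr ((real n + real s) / 2)})"

definition kron :: "complex^'a^'a \<Rightarrow> complex^'b^'b \<Rightarrow> complex^('a \<times> 'b)^('a \<times> 'b)" where
  "kron M N = (\<chi> i j. M $ fst i $ fst j * N $ snd i $ snd j)"

definition conj_transpose :: "complex^'n^'m \<Rightarrow> complex^'m^'n" where
  "conj_transpose A = (\<chi> i j. cnj (A $ j $ i))"

end

theory Submission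
  imports Defs "HOL-Computational_Algebra.Polynomial" "HOL-Computational_Algebra.Primes" "HOL-Number_Theory.Cong"
begin

lemma zeta_pow_eq: "zeta p ^ k = cis (2 * pi * real k / real p)"
proof -
  have "zeta p ^ k = cis (real k * (2 * pi / real p))" by (simp only: zeta_def Complex.DeMoivre)
  also have "real k * (2 * pi / real p) = 2 * pi * real k / real p" by simp
  finally show ?thesis .
qed

lemma zeta_p_1: "p > 0 \<Longrightarrow> zeta p ^ p = 1"
proof -
  assume "p > 0"
  then have "2 * pi * real p / real p = 2 * pi * 1" by simp
  then show ?thesis unfolding zeta_pow_eq by (metis cis_2pi mult.right_neutral)
qed

lemma zeta_pow_mod: "p > 0 \<Longrightarrow> zeta p ^ (k mod p) = zeta p ^ k"
proof -
  assume p: "p > 0"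
  have "zeta p ^ k = zeta p ^ (p * (k div p) + k mod p)" by simp
  also have "\<dots> = zeta p ^ (k mod p)" unfolding power_add power_mult zeta_p_1[OF p] by simp
  finally show ?thesis by simp
qed

lemma zeta_pow_1_iff: "p > 0 \<Longrightarrow> zeta p ^ k = 1 \<longleftrightarrow> p dvd k"
proof
  assume p: "p > 0" and h: "zeta p ^ k = 1"
  have "cos (2 * pi * real k / real p) = 1"
  proof -
    have "Re (zeta p ^ k) = cos (2 * pi * real k / real p)" unfolding zeta_pow_eq by simp
    then show ?thesis using h by simp
  qed
  then obtain m :: int where m: "2 * pi * real k / real p = of_int m * 2 * pi" using cos_one_2pi_int by blast
  then have "real k = m * real p" using p by (simp add: field_simps)
  then have "int k = m * int p" by (metis of_int_eq_iff of_int_mult of_int_of_nat_eq)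
  then have "int p dvd int k" by simp
  then show "p dvd k" by simp
next
  assume p: "p > 0" and "p dvd k"
  then obtain j where "k = p * j" by auto
  then show "zeta p ^ k = 1" by (simp add: power_mult zeta_p_1[OF p])
qed

lemma norm_zeta_pow [simp]: "norm (zeta p ^ k) = 1"
  unfolding zeta_pow_eq by simp

lemma cnj_mult_self_unit: "norm (z::complex) = 1 \<Longrightarrow> cnj z * z = 1"
  by (metis complex_norm_square mult.commute of_real_1 power_one)

context
  fixes p :: nat
  assumes pr: "prime p" and ch: "CHAR('a::field) = p"
begin

lemma p_pos: "p > 0" using pr prime_gt_0_nat by blast

lemma of_nat_eq_iff_mod: "(of_nat a :: 'a) = of_nat b \<longleftrightarrow> a mod p = b mod p"
  using of_nat_eq_iff_cong_CHAR[where 'a='a] ch by (simp add: cong_def)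

lemma fp_lift_of_nat: "fp_lift p (of_nat k :: 'a) = k mod p"
  unfolding fp_lift_def
proof (rule the_equality)
  show "k mod p < p \<and> (of_nat (k mod p) :: 'a) = of_nat k"
    using p_pos by (simp add: of_nat_eq_iff_mod)
next
  fix j assume "j < p \<and> (of_nat j :: 'a) = of_nat k"
  then show "j = k mod p" using of_nat_eq_iff_mod[of j k] by auto
qed

lemma zeta_pow_of_nat: "zeta_pow p (of_nat k :: 'a) = zeta p ^ k"
  unfolding zeta_pow_def fp_lift_of_nat using zeta_pow_mod p_pos by simp

lemma zp_add: "a \<in> prime_subfield \<Longrightarrow> b \<in> prime_subfield \<Longrightarrow>
   zeta_pow p (a + b :: 'a) = zeta_pow p a * zeta_pow p b"
  unfolding prime_subfield_def
  by (auto simp: zeta_pow_of_nat power_add simp flip: of_nat_add)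

lemma zp_norm: "a \<in> prime_subfield \<Longrightarrow> norm (zeta_pow p (a :: 'a)) = 1"
  unfolding prime_subfield_def by (auto simp: zeta_pow_of_nat)

lemma subfield_diff: "a \<in> prime_subfield \<Longrightarrow> b \<in> prime_subfield \<Longrightarrow> (a - b :: 'a) \<in> prime_subfield"
proof -
  assume "a \<in> prime_subfield" "b \<in> prime_subfield"
  then obtain i j where ij: "a = of_nat i" "b = of_nat j" unfolding prime_subfield_def by auto
  have "(of_nat (j mod p) :: 'a) = of_nat j" using p_pos by (simp add: of_nat_eq_iff_mod)
  moreover have jm: "j mod p \<le> p" using p_pos by (simp add: less_imp_le)
  moreover have p0: "(of_nat p :: 'a) = 0" using ch of_nat_CHAR by blast
  ultimately have "(of_nat (i + (p - j mod p)) :: 'a) = of_nat i - of_nat j"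
    by (simp add: of_nat_diff[OF jm])
  then have "a - b = of_nat (i + (p - j mod p))" unfolding ij by simp
  then show ?thesis unfolding prime_subfield_def by blast
qed

lemma zp_diff: "a \<in> prime_subfield \<Longrightarrow> b \<in> prime_subfield \<Longrightarrow>
   zeta_pow p (a - b :: 'a) = zeta_pow p a * cnj (zeta_pow p b)"
proof -
  assume a: "a \<in> prime_subfield" and b: "b \<in> prime_subfield"
  have "zeta_pow p a = zeta_pow p (a - b) * zeta_pow p b"
    using zp_add[OF subfield_diff[OF a b] b] by simp
  then have "zeta_pow p a * cnj (zeta_pow p b) = zeta_pow p (a - b) * (cnj (zeta_pow p b) * zeta_pow p b)"
    by (simp add: mult_ac)
  then show ?thesis using cnj_mult_self_unit[OF zp_norm[OF b]] by simp
qed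

lemma zp_zero: "zeta_pow p (0::'a) = 1"
  using zeta_pow_of_nat[of 0] by simp

lemma zp_ne1: "a \<in> prime_subfield \<Longrightarrow> a \<noteq> 0 \<Longrightarrow> zeta_pow p (a::'a) \<noteq> 1"
proof -
  assume "a \<in> prime_subfield" "a \<noteq> 0"
  then obtain i where i: "a = of_nat i" unfolding prime_subfield_def by auto
  with \<open>a \<noteq> 0\<close> have "\<not> p dvd i" using ch of_nat_eq_0_iff_char_dvd by blast
  then show ?thesis unfolding i zeta_pow_of_nat using zeta_pow_1_iff p_pos by blast
qed

end

lemma sum_shift_UNIV: "(\<Sum>x\<in>(UNIV::'a::{ab_group_add,finite} set). h (x + c)) = (\<Sum>x\<in>UNIV. h x)"
  by (rule sum.reindex_bij_witness[of _ "\<lambda>x. x - c" "\<lambda>x. x + c"]) auto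

lemma of_nat_card_zero: "of_nat CARD('a::{ring_1,finite}) = (0::'a)"
proof -
  have "(\<Sum>x\<in>(UNIV::'a set). x + 1) = (\<Sum>x\<in>UNIV. x)" by (rule sum_shift_UNIV)
  then show ?thesis by (simp add: sum.distrib)
qed

lemma power_card_same: "(x::'a::{field,finite}) ^ CARD('a) = x"
proof (cases "x = 0")
  case False
  have "x * (\<Prod>y\<in>UNIV-{0}. x * y) = x * x ^ (card (UNIV :: 'a set) - 1) * \<Prod>(UNIV-{0})"
    by (simp add: prod.distrib mult_ac)
  also have "x * x ^ (card (UNIV :: 'a set) - 1) = x ^ Suc (card (UNIV :: 'a set) - 1)"
    by (subst power_Suc) auto
  also have "Suc (card (UNIV :: 'a set) - 1) = card (UNIV :: 'a set)"
    using finite_UNIV_card_ge_0[where ?'a = 'a] by simp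
  also have "(\<Prod>y\<in>UNIV-{0}. x * y) = (\<Prod>y\<in>UNIV-{0}. y)"
    by (rule prod.reindex_bij_witness[of _ "\<lambda>y. y / x" "\<lambda>y. x * y"]) (use False in auto)
  finally show ?thesis
    by simp
qed (use finite_UNIV_card_ge_0[where ?'a = 'a] in auto)

context
  fixes p n :: nat
  assumes pr: "prime p" and card: "CARD('a::{field,finite}) = p ^ n"
begin

lemma char_eq: "CHAR('a) = p"
proof -
  have pos: "CHAR('a) > 0" by (rule finite_imp_CHAR_pos) simp
  have prc: "prime CHAR('a)" using prime_CHAR_semidom[OF pos] .
  have "CHAR('a) dvd p ^ n" using of_nat_card_zero[where 'a='a] card
    by (metis of_nat_eq_0_iff_char_dvd)
  then have "CHAR('a) dvd p" using prc prime_dvd_power by blast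
  then show ?thesis using prc pr primes_dvd_imp_eq by blast
qed

lemma prime_char: "prime CHAR('a)" using char_eq pr by simp

lemma n_pos: "n > 0"
proof (rule ccontr)
  assume "\<not> n > 0"
  then have "CARD('a) = 1" using card by simp
  moreover have "card {0::'a, 1} \<le> CARD('a)" by (rule card_mono) auto
  ultimately show False by simp
qed

lemma pow_pn: "(x::'a) ^ (p ^ n) = x"
  using power_card_same[of x] card by simp

lemma frob: "((x::'a) + y) ^ (p ^ i) = x ^ (p ^ i) + y ^ (p ^ i)"
  by (rule freshmans_dream'[OF prime_char]) (simp add: char_eq)

lemma tr_add: "tr p n ((x::'a) + y) = tr p n x + tr p n y"
  unfolding tr_def frob by (simp add: sum.distrib)

lemma tr_zero: "tr p n (0::'a) = 0"
proof -
  have "p > 0" using pr prime_gt_0_nat by blast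
  then have "(0::'a) ^ (p ^ i) = 0" for i by simp
  then show ?thesis unfolding tr_def by (simp only: sum.neutral_const)
qed

lemma tr_pow_p: "(tr p n (z::'a)) ^ p = tr p n z"
proof -
  have "(tr p n z) ^ p = (\<Sum>i<n. (z ^ (p ^ i)) ^ p)"
    unfolding tr_def by (rule freshmans_dream_sum[OF prime_char]) (simp add: char_eq)
  also have "\<dots> = (\<Sum>i<n. z ^ (p ^ Suc i))"
    by (simp only: power_Suc2 power_mult)
  finally have 1: "(tr p n z) ^ p = (\<Sum>i<n. z ^ (p ^ Suc i))" .
  have "z ^ (p ^ 0) + (\<Sum>i<n. z ^ (p ^ Suc i)) = (\<Sum>i<Suc n. z ^ (p ^ i))"
    by (rule sum.lessThan_Suc_shift[symmetric])
  also have "\<dots> = tr p n z + z ^ (p ^ n)" unfolding tr_def by simp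
  finally show ?thesis using 1 pow_pn by simp
qed

lemma of_nat_pow_p: "(of_nat k :: 'a) ^ p = of_nat k"
proof (induction k)
  case 0 then show ?case using pr prime_gt_0_nat by simp
next
  case (Suc k)
  have "(of_nat (Suc k) :: 'a) ^ p = (of_nat k + 1) ^ p" by (simp add: add.commute)
  also have "\<dots> = of_nat k ^ p + 1 ^ p"
    by (rule freshmans_dream[OF prime_char]) (simp add: char_eq)
  finally show ?case using Suc by (simp add: add.commute)
qed

lemma fixed_in_subfield: "(y::'a) ^ p = y \<Longrightarrow> y \<in> prime_subfield"
proof -
  assume y: "y ^ p = y"
  define Q :: "'a poly" where "Q = Polynomial.monom 1 p - [:0, 1:]"
  have p2: "p \<ge> 2" using pr prime_ge_2_nat by blast
  obtain k where k0: "p = 2 + k" using le_Suc_ex[OF p2] by blast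
  have k: "p = Suc (Suc k)" unfolding k0 by simp
  have c1: "coeff (Polynomial.monom (1::'a) p) p = 1" by simp
  have c2: "coeff [:0::'a, 1:] p = 0" unfolding k by simp
  have cQ: "coeff Q p = 1" unfolding Q_def coeff_diff c1 c2 by simp
  then have Q0: "Q \<noteq> 0" by auto
  have "degree Q \<le> p" unfolding Q_def
  proof (rule degree_diff_le)
    show "degree (Polynomial.monom (1::'a) p) \<le> p" by (simp add: degree_monom_eq)
    show "degree [:0::'a, 1:] \<le> p" using p2 by simp
  qed
  then have cardR: "card {x. poly Q x = 0} \<le> p" using card_poly_roots_bound[OF Q0] le_trans by blast
  have polyQ: "poly Q x = x ^ p - x" for x unfolding Q_def by (simp add: poly_monom)
  have sub: "of_nat ` {..<p} \<subseteq> {x::'a. poly Q x = 0}" using of_nat_pow_p by (auto simp: polyQ)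
  have inj: "inj_on (of_nat :: nat \<Rightarrow> 'a) {..<p}"
    by (rule inj_onI) (simp add: of_nat_eq_iff_mod[OF pr char_eq])
  have "card (of_nat ` {..<p} :: 'a set) = p" using card_image[OF inj] by simp
  moreover have fin: "finite {x::'a. poly Q x = 0}" by simp
  moreover have "card (of_nat ` {..<p} :: 'a set) \<le> card {x::'a. poly Q x = 0}" by (rule card_mono[OF fin sub])
  ultimately have "card (of_nat ` {..<p} :: 'a set) = card {x::'a. poly Q x = 0}" using cardR by linarith
  then have eq: "of_nat ` {..<p} = {x::'a. poly Q x = 0}"
    by (rule card_subset_eq[OF fin sub])
  have "y \<in> {x::'a. poly Q x = 0}" using y by (simp add: polyQ)
  then show ?thesis unfolding eq[symmetric] prime_subfield_def by auto
qed

lemma tr_in: "tr p n (z::'a) \<in> prime_subfield"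
  using fixed_in_subfield tr_pow_p by blast

lemma tr_nonzero: "\<exists>y::'a. tr p n y \<noteq> 0"
proof (rule ccontr)
  assume "\<not> (\<exists>y::'a. tr p n y \<noteq> 0)"
  then have all: "tr p n (y::'a) = 0" for y by blast
  define Q :: "'a poly" where "Q = (\<Sum>i<n. Polynomial.monom 1 (p ^ i))"
  have p2: "p \<ge> 2" using pr prime_ge_2_nat by blast
  have polyQ: "poly Q x = tr p n x" for x unfolding Q_def tr_def by (simp add: poly_sum poly_monom)
  have injp: "p ^ i = p ^ j \<longleftrightarrow> i = j" for i j using p2 by (simp add: power_inject_exp)
  have "coeff Q (p ^ (n - 1)) = (\<Sum>i<n. if p ^ i = p ^ (n - 1) then 1 else 0)"
    unfolding Q_def coeff_sum coeff_monom by (simp only: eq_commute)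
  also have "\<dots> = (\<Sum>i<n. if i = n - 1 then 1 else 0)"
    by (simp only: injp)
  also have "\<dots> = 1" using n_pos by (simp add: sum.delta)
  finally have "coeff Q (p ^ (n - 1)) = 1" by simp
  then have Q0: "Q \<noteq> 0" by auto
  have "degree Q \<le> p ^ (n - 1)" unfolding Q_def
  proof (rule degree_sum_le)
    fix i assume "i \<in> {..<n}"
    then have "p ^ i \<le> p ^ (n - 1)" using p2 by (intro power_increasing) auto
    then show "degree (Polynomial.monom (1::'a) (p ^ i)) \<le> p ^ (n - 1)" by (simp add: degree_monom_eq)
  qed simp
  then have "card {x. poly Q x = 0} \<le> p ^ (n - 1)" using card_poly_roots_bound[OF Q0] by linarith
  moreover have "{x. poly Q x = 0} = (UNIV :: 'a set)" using all polyQ by auto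
  moreover have "p ^ (n - 1) < p ^ n" using p2 n_pos by (intro power_strict_increasing) auto
  ultimately show False using card by simp
qed

end

definition chi :: "nat \<Rightarrow> nat \<Rightarrow> 'a::field \<Rightarrow> 'a \<Rightarrow> complex" where
  "chi p n \<mu> x = zeta_pow p (tr p n (\<mu> * x))"

context
  fixes p n :: nat
  assumes pr: "prime p" and card: "CARD('a::{field,finite}) = p ^ n"
begin

lemma chE: "CHAR('a) = p" using char_eq[OF pr card] .

lemma chi_add: "chi p n \<mu> ((x::'a) + y) = chi p n \<mu> x * chi p n \<mu> y"
  unfolding chi_def distrib_left tr_add[OF pr card]
  by (rule zp_add[OF pr chE tr_in[OF pr card] tr_in[OF pr card]])

lemma chi_diff: "chi p n \<mu> ((x::'a) - y) = chi p n \<mu> x * cnj (chi p n \<mu> y)"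
proof -
  have "tr p n (\<mu> * x) = tr p n (\<mu> * (x - y)) + tr p n (\<mu> * y)"
    using tr_add[OF pr card, of "\<mu> * (x - y)" "\<mu> * y"] by (simp add: algebra_simps)
  then have "tr p n (\<mu> * (x - y)) = tr p n (\<mu> * x) - tr p n (\<mu> * y)" by simp
  then show ?thesis unfolding chi_def
    using zp_diff[OF pr chE tr_in[OF pr card] tr_in[OF pr card]] by simp
qed

lemma chi_comm: "chi p n \<mu> (x::'a) = chi p n x \<mu>"
  unfolding chi_def by (simp add: mult.commute)

lemma chi_zero: "chi p n 0 (x::'a) = 1"
  unfolding chi_def using tr_zero[OF pr card] zp_zero[OF pr chE] by simp

lemma chi_norm: "norm (chi p n \<mu> (x::'a)) = 1"
  unfolding chi_def by (rule zp_norm[OF pr chE tr_in[OF pr card]])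

lemma orth: "(\<Sum>x\<in>UNIV. chi p n \<mu> (x::'a)) = (if \<mu> = 0 then of_nat (p ^ n) else 0)"
proof (cases "\<mu> = 0")
  case True
  then show ?thesis using card by (simp add: chi_zero)
next
  case False
  obtain y :: 'a where y: "tr p n y \<noteq> 0" using tr_nonzero[OF pr card] by blast
  define c where "c = y / \<mu>"
  have mc: "\<mu> * c = y" unfolding c_def using False by simp
  have ne: "chi p n \<mu> c \<noteq> 1" unfolding chi_def mc
    by (rule zp_ne1[OF pr chE tr_in[OF pr card] y])
  have "(\<Sum>x\<in>UNIV. chi p n \<mu> (x::'a)) = (\<Sum>x\<in>UNIV. chi p n \<mu> (x + c))"
    by (rule sum_shift_UNIV[symmetric])
  also have "\<dots> = chi p n \<mu> c * (\<Sum>x\<in>UNIV. chi p n \<mu> x)"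
    by (simp add: chi_add sum_distrib_left mult.commute)
  finally have "(1 - chi p n \<mu> c) * (\<Sum>x\<in>UNIV. chi p n \<mu> (x::'a)) = 0"
    by (simp add: algebra_simps)
  then show ?thesis using ne False by simp
qed

lemma inversion:
  fixes h :: "'a \<Rightarrow> complex"
  shows "(\<Sum>\<mu>\<in>UNIV. (\<Sum>x\<in>UNIV. h x * cnj (chi p n \<mu> x)) * chi p n \<mu> u) = of_nat (p ^ n) * h u"
proof -
  have "(\<Sum>\<mu>\<in>UNIV. (\<Sum>x\<in>UNIV. h x * cnj (chi p n \<mu> x)) * chi p n \<mu> u)
      = (\<Sum>\<mu>\<in>UNIV. \<Sum>x\<in>UNIV. h x * chi p n (u - x) \<mu>)"
  proof (intro sum.cong refl)
    fix \<mu> :: 'a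
    have "\<And>x. chi p n (u - x) \<mu> = chi p n \<mu> u * cnj (chi p n \<mu> x)"
      using chi_comm chi_diff by metis
    then show "(\<Sum>x\<in>UNIV. h x * cnj (chi p n \<mu> x)) * chi p n \<mu> u = (\<Sum>x\<in>UNIV. h x * chi p n (u - x) \<mu>)"
      by (simp add: sum_distrib_left mult_ac)
  qed
  also have "\<dots> = (\<Sum>x\<in>UNIV. h x * (\<Sum>\<mu>\<in>UNIV. chi p n (u - x) \<mu>))"
    by (subst sum.swap) (simp add: sum_distrib_left)
  also have "\<dots> = (\<Sum>x\<in>UNIV. if x = u then of_nat (p ^ n) * h x else 0)"
    by (intro sum.cong refl) (simp add: orth)
  also have "\<dots> = of_nat (p ^ n) * h u" by (simp add: sum.delta)
  finally show ?thesis .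
qed

lemma walsh_eq:
  assumes "\<forall>x. f x \<in> prime_subfield"
  shows "walsh p n f \<mu> = (\<Sum>x\<in>UNIV. zeta_pow p (f x) * cnj (chi p n \<mu> (x::'a)))"
  unfolding walsh_def chi_def
  by (intro sum.cong refl zp_diff[OF pr chE] assms[rule_format] tr_in[OF pr card])

end

lemma norm_sq_cases:
  fixes W :: complex and p :: nat and r :: real
  assumes "cmod W \<in> {0, real p powr (r / 2)}" and "p > 0"
  shows "W * W * cnj W = of_real (real p powr r) * W"
proof -
  have e: "W * cnj W = of_real ((cmod W)\<^sup>2)" by (rule complex_norm_square[symmetric])
  show ?thesis
  proof (cases "cmod W = 0")
    case True then show ?thesis by simp
  next
    case False
    then have "cmod W = real p powr (r / 2)" using assms(1) by auto
    then have "(cmod W)\<^sup>2 = real p powr r"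
      by (simp add: power2_eq_square powr_add[symmetric])
    then have "W * cnj W = of_real (real p powr r)" using e by simp
    then show ?thesis by (metis mult.assoc mult.commute)
  qed
qed

context
  fixes p n :: nat
  assumes pr: "prime p" and card: "CARD('a::{field,finite}) = p ^ n"
begin

lemma chi_shift3: "chi p n \<mu> ((v::'a) + (t - y)) = chi p n \<mu> v * chi p n \<mu> t * cnj (chi p n \<mu> y)"
  by (simp add: chi_add[OF pr card] chi_diff[OF pr card] mult.assoc)

lemma factor_G:
  fixes F :: "'a \<Rightarrow> complex" and W :: "'a \<Rightarrow> complex"
  defines "W \<equiv> \<lambda>\<mu>. (\<Sum>x\<in>UNIV. F x * cnj (chi p n \<mu> x))"
  defines "G \<equiv> \<lambda>u. (\<Sum>t\<in>UNIV. \<Sum>y\<in>UNIV. F (u - t + y) * cnj (F y) * F t)"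
  shows "(\<Sum>u\<in>UNIV. G u * cnj (chi p n \<mu> u)) = W \<mu> * W \<mu> * cnj (W \<mu>)"
proof -
  let ?c = "\<lambda>x. chi p n \<mu> x"
  have inner: "(\<Sum>u\<in>UNIV. F (u - t + y) * cnj (?c u)) = W \<mu> * cnj (?c t) * ?c y" for t y
  proof -
    have "(\<Sum>u\<in>UNIV. F (u - t + y) * cnj (?c u)) = (\<Sum>v\<in>UNIV. F (v + (t - y) - t + y) * cnj (?c (v + (t - y))))"
      by (rule sum_shift_UNIV[symmetric])
    also have "\<dots> = (\<Sum>v\<in>UNIV. F v * cnj (?c v) * (cnj (?c t) * ?c y))"
      by (intro sum.cong refl) (simp add: chi_shift3 mult_ac)
    also have "\<dots> = (\<Sum>v\<in>UNIV. F v * cnj (?c v)) * (cnj (?c t) * ?c y)"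
      by (rule sum_distrib_right[symmetric])
    also have "\<dots> = W \<mu> * cnj (?c t) * ?c y"
      unfolding W_def by (simp only: mult.assoc)
    finally show ?thesis .
  qed
  have "(\<Sum>u\<in>UNIV. G u * cnj (?c u)) = (\<Sum>u\<in>UNIV. \<Sum>t\<in>UNIV. \<Sum>y\<in>UNIV. F (u - t + y) * cnj (?c u) * (cnj (F y) * F t))"
    unfolding G_def by (simp add: sum_distrib_left sum_distrib_right mult_ac)
  also have "\<dots> = (\<Sum>t\<in>UNIV. \<Sum>u\<in>UNIV. \<Sum>y\<in>UNIV. F (u - t + y) * cnj (?c u) * (cnj (F y) * F t))"
    by (rule sum.swap)
  also have "\<dots> = (\<Sum>t\<in>UNIV. \<Sum>y\<in>UNIV. \<Sum>u\<in>UNIV. F (u - t + y) * cnj (?c u) * (cnj (F y) * F t))"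
    by (rule sum.cong[OF refl], rule sum.swap)
  also have "\<dots> = (\<Sum>t\<in>UNIV. \<Sum>y\<in>UNIV. (W \<mu> * cnj (?c t) * ?c y) * (cnj (F y) * F t))"
    by (simp add: sum_distrib_right[symmetric] inner)
  also have "\<dots> = W \<mu> * (\<Sum>t\<in>UNIV. F t * cnj (?c t)) * (\<Sum>y\<in>UNIV. cnj (F y * cnj (?c y)))"
    by (simp add: sum_distrib_left sum_distrib_right mult_ac)
  also have "\<dots> = W \<mu> * W \<mu> * cnj (W \<mu>)"
    unfolding W_def by (simp add: cnj_sum)
  finally show ?thesis .
qed

lemma factor_main:
  fixes f :: "'a \<Rightarrow> 'a" and F :: "'a \<Rightarrow> complex"
  assumes fs: "\<forall>x. f x \<in> prime_subfield" and pl: "plateaued p n s f"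
  defines "F \<equiv> \<lambda>x. zeta_pow p (f x)"
  shows "(\<Sum>z\<in>UNIV. (\<Sum>y\<in>UNIV. F (x + y) * cnj (F (z + y))) * F (z + w)) = of_nat (p ^ (n + s)) * F (x + w)"
proof -
  define W where "W \<equiv> \<lambda>\<mu>. (\<Sum>x\<in>UNIV. F x * cnj (chi p n \<mu> x))"
  define G where "G \<equiv> \<lambda>u. (\<Sum>t\<in>UNIV. \<Sum>y\<in>UNIV. F (u - t + y) * cnj (F y) * F t)"
  have p0: "p > 0" using pr prime_gt_0_nat by blast
  have hatG: "(\<Sum>u\<in>UNIV. G u * cnj (chi p n \<mu> u)) = W \<mu> * W \<mu> * cnj (W \<mu>)" for \<mu>
    unfolding W_def G_def by (rule factor_G)
  have Wpl: "W \<mu> * W \<mu> * cnj (W \<mu>) = of_nat (p ^ (n + s)) * W \<mu>" for \<mu>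
  proof -
    have "W \<mu> = walsh p n f \<mu>" unfolding W_def F_def by (rule walsh_eq[OF pr card fs, symmetric])
    moreover have "cmod (walsh p n f \<mu>) \<in> {0, real p powr ((real n + real s) / 2)}"
      using pl unfolding plateaued_def by blast
    ultimately have "W \<mu> * W \<mu> * cnj (W \<mu>) = of_real (real p powr (real n + real s)) * W \<mu>"
      using norm_sq_cases p0 by metis
    moreover have "real p powr (real n + real s) = real p ^ (n + s)"
      using p0 by (simp add: powr_realpow[symmetric])
    ultimately show ?thesis by simp
  qed
  have Ginv: "G u = of_nat (p ^ (n + s)) * F u" for u
  proof -
    have "of_nat (p ^ n) * G u = (\<Sum>\<mu>\<in>UNIV. (\<Sum>x\<in>UNIV. G x * cnj (chi p n \<mu> x)) * chi p n \<mu> u)"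
      by (rule inversion[OF pr card, symmetric])
    also have "\<dots> = (\<Sum>\<mu>\<in>UNIV. of_nat (p ^ (n + s)) * (W \<mu> * chi p n \<mu> u))"
      by (intro sum.cong refl) (simp add: hatG Wpl)
    also have "\<dots> = of_nat (p ^ (n + s)) * (\<Sum>\<mu>\<in>UNIV. W \<mu> * chi p n \<mu> u)"
      by (simp add: sum_distrib_left)
    also have "(\<Sum>\<mu>\<in>UNIV. W \<mu> * chi p n \<mu> u) = of_nat (p ^ n) * F u"
      unfolding W_def by (rule inversion[OF pr card])
    finally have "of_nat (p ^ n) * G u = of_nat (p ^ n) * (of_nat (p ^ (n + s)) * F u)" by (simp add: mult_ac)
    moreover have "(of_nat (p ^ n) :: complex) \<noteq> 0" using p0 by simp
    ultimately show ?thesis by (metis mult_left_cancel)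
  qed
  have step1: "(\<Sum>y\<in>UNIV. F (x + y) * cnj (F (z + y))) = (\<Sum>y\<in>UNIV. F (x - z + y) * cnj (F y))" for z
  proof -
    have "(\<Sum>y\<in>UNIV. F (x + y) * cnj (F (z + y))) = (\<Sum>y\<in>UNIV. F (x + (y + - z)) * cnj (F (z + (y + - z))))"
      by (rule sum_shift_UNIV[symmetric])
    also have "\<dots> = (\<Sum>y\<in>UNIV. F (x - z + y) * cnj (F y))"
      by (intro sum.cong refl) (simp add: algebra_simps)
    finally show ?thesis .
  qed
  have "(\<Sum>z\<in>UNIV. (\<Sum>y\<in>UNIV. F (x + y) * cnj (F (z + y))) * F (z + w))
      = (\<Sum>z\<in>UNIV. (\<Sum>y\<in>UNIV. F (x - z + y) * cnj (F y)) * F (z + w))"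
    by (simp add: step1)
  also have "\<dots> = (\<Sum>t\<in>UNIV. (\<Sum>y\<in>UNIV. F (x - (t + - w) + y) * cnj (F y)) * F ((t + - w) + w))"
    by (rule sum_shift_UNIV[symmetric])
  also have "\<dots> = G (x + w)"
    unfolding G_def by (intro sum.cong refl) (simp add: sum_distrib_left sum_distrib_right algebra_simps)
  finally show ?thesis using Ginv by simp
qed

end

lemma triple_entry:
  fixes A :: "complex^'n^'n"
  shows "(A ** conj_transpose A ** A) $ i $ j = (\<Sum>k\<in>UNIV. (\<Sum>l\<in>UNIV. A $ i $ l * cnj (A $ k $ l)) * A $ k $ j)"
  by (simp add: matrix_matrix_mult_def conj_transpose_def)

lemma sum_prod_split:
  fixes f :: "'a::finite \<Rightarrow> complex" and g :: "'b::finite \<Rightarrow> complex"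
  shows "(\<Sum>x\<in>UNIV. f (fst x) * g (snd x)) = (\<Sum>a\<in>UNIV. f a) * (\<Sum>b\<in>UNIV. g b)"
proof -
  have "(\<Sum>a\<in>UNIV. f a) * (\<Sum>b\<in>UNIV. g b) = (\<Sum>a\<in>UNIV. \<Sum>b\<in>UNIV. f a * g b)" by (rule sum_product)
  also have "\<dots> = (\<Sum>(a,b)\<in>UNIV \<times> UNIV. f a * g b)" by (rule sum.cartesian_product)
  also have "\<dots> = (\<Sum>x\<in>UNIV. f (fst x) * g (snd x))" by (simp add: case_prod_beta UNIV_Times_UNIV)
  finally show ?thesis by simp
qed

lemma kron_triple:
  fixes M :: "complex^'a::finite^'a" and N :: "complex^'b::finite^'b"
  shows "(kron M N ** conj_transpose (kron M N) ** kron M N) $ i $ j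
       = (M ** conj_transpose M ** M) $ fst i $ fst j * (N ** conj_transpose N ** N) $ snd i $ snd j"
proof -
  have inner: "(\<Sum>l\<in>UNIV. kron M N $ i $ l * cnj (kron M N $ k $ l))
      = (\<Sum>l1\<in>UNIV. M $ fst i $ l1 * cnj (M $ fst k $ l1)) * (\<Sum>l2\<in>UNIV. N $ snd i $ l2 * cnj (N $ snd k $ l2))" for k
    using sum_prod_split[of "\<lambda>l1. M $ fst i $ l1 * cnj (M $ fst k $ l1)" "\<lambda>l2. N $ snd i $ l2 * cnj (N $ snd k $ l2)"]
    by (simp add: kron_def mult_ac)
  have "(kron M N ** conj_transpose (kron M N) ** kron M N) $ i $ j
      = (\<Sum>k\<in>UNIV. ((\<Sum>l1\<in>UNIV. M $ fst i $ l1 * cnj (M $ fst k $ l1)) * M $ fst k $ fst j)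
                  * ((\<Sum>l2\<in>UNIV. N $ snd i $ l2 * cnj (N $ snd k $ l2)) * N $ snd k $ snd j))"
    unfolding triple_entry inner by (simp add: kron_def mult_ac)
  also have "\<dots> = (\<Sum>k1\<in>UNIV. (\<Sum>l1\<in>UNIV. M $ fst i $ l1 * cnj (M $ k1 $ l1)) * M $ k1 $ fst j)
                 * (\<Sum>k2\<in>UNIV. (\<Sum>l2\<in>UNIV. N $ snd i $ l2 * cnj (N $ k2 $ l2)) * N $ k2 $ snd j)"
    by (rule sum_prod_split)
  finally show ?thesis unfolding triple_entry .
qed

lemma factor_matrix:
  fixes f :: "'a::{field,finite} \<Rightarrow> 'a"
  assumes "prime p" "CARD('a) = p ^ n" "\<forall>x. f x \<in> prime_subfield" "plateaued p n s f"
  shows "((\<chi> x y. zeta_pow p (f (x + y))) ** conj_transpose (\<chi> x y. zeta_pow p (f (x + y))) ** (\<chi> x y. zeta_pow p (f (x + y)))) $ x $ w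
       = of_nat (p ^ (n + s)) * zeta_pow p (f (x + w))"
  unfolding triple_entry using factor_main[OF assms] by simp

theorem mainTheorem8:
  fixes p n m s1 s2 :: nat
    and f :: "'a::{field,finite} \<Rightarrow> 'a"
    and g :: "'b::{field,finite} \<Rightarrow> 'b"
  assumes "prime p"
    and "CARD('a) = p ^ n" and "CARD('b) = p ^ m"
    and "\<forall>x. f x \<in> prime_subfield" and "\<forall>a. g a \<in> prime_subfield"
    and "plateaued p n s1 f" and "plateaued p m s2 g"
  shows "let M = (\<chi> x y. zeta_pow p (f (x + y)));
             N = (\<chi> a b. zeta_pow p (g (a + b)));
             P = kron M N
         in P ** conj_transpose P ** P = of_nat (p ^ (n + m + s1 + s2)) *\<^sub>R P"
proof -
  let ?M = "(\<chi> x y. zeta_pow p (f (x + y)))"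
  let ?N = "(\<chi> a b. zeta_pow p (g (a + b)))"
  have eq: "(kron ?M ?N ** conj_transpose (kron ?M ?N) ** kron ?M ?N) $ i $ j
          = (of_nat (p ^ (n + m + s1 + s2)) *\<^sub>R kron ?M ?N) $ i $ j" for i j
  proof -
    have "(kron ?M ?N ** conj_transpose (kron ?M ?N) ** kron ?M ?N) $ i $ j
        = (of_nat (p ^ (n + s1)) * zeta_pow p (f (fst i + fst j))) * (of_nat (p ^ (m + s2)) * zeta_pow p (g (snd i + snd j)))"
      unfolding kron_triple factor_matrix[OF assms(1,2,4,6)] factor_matrix[OF assms(1,3,5,7)] ..
    also have "\<dots> = of_nat (p ^ (n + m + s1 + s2)) *\<^sub>R (kron ?M ?N $ i $ j)"
      unfolding kron_def vec_lambda_beta scaleR_conv_of_real by (simp add: power_add algebra_simps)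
    also have "\<dots> = (of_nat (p ^ (n + m + s1 + s2)) *\<^sub>R kron ?M ?N) $ i $ j"
      by simp
    finally show ?thesis .
  qed
  then show ?thesis unfolding Let_def by (simp add: vec_eq_iff)
qed

end
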